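(* Let $G$ be a finite indecomposable group. Then $G$ has Property A if and only if $G$ is Chermak-Delgado simple.
   Context: All groups are finite. A group is indecomposable if it cannot be written as a direct product $H \times K$ with $H \neq 1$ and $K \neq 1$. A group $G$ has Property A if for every non-trivial abelian normal subgroup $A$ of $G$, $|G/C_G(A)| > |A|$. For $H \leq G$, $m_G(H) = |H|\,|C_G(H)|$; $m^*(G) = \max\{ m_G(H) : H \leq G\}$; $\mathcal{CD}(G) = \{ H \leq G : m_G(H) = m^*(G)\}$. $G$ is Chermak-Delgado simple if $\mathcal{CD}(G) = \{1, G\}$. *)

theory Defs
  imports "HOL-Algebra.Algebra"
begin

definition centralizer :: "('a, 'b) monoid_scheme \<Rightarrow> 'a set \<Rightarrow> 'a set" where
  "centralizer G H = {g \<in> carrier G. \<forall>h \<in> H. g \<otimes>\<^bsub>G\<^esub> h = h \<otimes>\<^bsub>G\<^esub> g}"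

definition indecomposable :: "('a, 'b) monoid_scheme \<Rightarrow> bool" where
  "indecomposable G \<longleftrightarrow>
     \<not> (\<exists>H K. H \<lhd> G \<and> K \<lhd> G \<and> H \<inter> K = {\<one>\<^bsub>G\<^esub>} \<and> H <#>\<^bsub>G\<^esub> K = carrier G
              \<and> H \<noteq> {\<one>\<^bsub>G\<^esub>} \<and> K \<noteq> {\<one>\<^bsub>G\<^esub>})"

definition property_A :: "('a, 'b) monoid_scheme \<Rightarrow> bool" where
  "property_A G \<longleftrightarrow>
     (\<forall>A. A \<lhd> G \<and> A \<noteq> {\<one>\<^bsub>G\<^esub>} \<and> (\<forall>x\<in>A. \<forall>y\<in>A. x \<otimes>\<^bsub>G\<^esub> y = y \<otimes>\<^bsub>G\<^esub> x)
          \<longrightarrow> card (rcosets\<^bsub>G\<^esub> (centralizer G A)) > card A)"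

definition cd_measure :: "('a, 'b) monoid_scheme \<Rightarrow> 'a set \<Rightarrow> nat" where
  "cd_measure G H = card H * card (centralizer G H)"

definition cd_max :: "('a, 'b) monoid_scheme \<Rightarrow> nat" where
  "cd_max G = Max {cd_measure G H | H. subgroup H G}"

definition CD :: "('a, 'b) monoid_scheme \<Rightarrow> 'a set set" where
  "CD G = {H. subgroup H G \<and> cd_measure G H = cd_max G}"

definition CD_simple :: "('a, 'b) monoid_scheme \<Rightarrow> bool" where
  "CD_simple G \<longleftrightarrow> CD G = {{\<one>\<^bsub>G\<^esub>}, carrier G}"

end

theory Submission imports Defs begin

locale cdg = group G for G (structure) + assumes fin: "finite (carrier G)"

context cdg
begin

abbreviation "C \<equiv> centralizer G"
abbreviation "mm \<equiv> cd_measure G"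

lemma cent_sub: "C H \<subseteq> carrier G"
  unfolding centralizer_def by auto

lemma cent_subgroup: assumes "H \<subseteq> carrier G" shows "subgroup (C H) G"
proof (rule subgroupI)
  show "C H \<subseteq> carrier G" by (rule cent_sub)
  have "\<one> \<in> C H" using assms unfolding centralizer_def by auto
  then show "C H \<noteq> {}" by auto
next
  fix a assume a: "a \<in> C H"
  show "inv a \<in> C H" unfolding centralizer_def
  proof (safe)
    show "inv a \<in> carrier G" using a cent_sub by auto
  next
    fix h assume h: "h \<in> H"
    have ac: "a \<in> carrier G" and e: "a \<otimes> h = h \<otimes> a" using a h unfolding centralizer_def by auto
    have hc: "h \<in> carrier G" using h assms by auto
    have "inv a \<otimes> h = inv a \<otimes> (h \<otimes> a) \<otimes> inv a" using ac hc by (simp add: m_assoc)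
    also have "\<dots> = inv a \<otimes> (a \<otimes> h) \<otimes> inv a" using e by simp
    also have "\<dots> = h \<otimes> inv a" using ac hc by (simp add: m_assoc[symmetric])
    finally show "inv a \<otimes> h = h \<otimes> inv a" .
  qed
next
  fix a b assume a: "a \<in> C H" and b: "b \<in> C H"
  show "a \<otimes> b \<in> C H" unfolding centralizer_def
  proof safe
    show "a \<otimes> b \<in> carrier G" using a b cent_sub by auto
  next
    fix h assume h: "h \<in> H"
    have ac: "a \<in> carrier G" and e: "a \<otimes> h = h \<otimes> a" using a h unfolding centralizer_def by auto
    have bc: "b \<in> carrier G" and e2: "b \<otimes> h = h \<otimes> b" using b h unfolding centralizer_def by auto
    have hc: "h \<in> carrier G" using h assms by auto
    have "a \<otimes> b \<otimes> h = a \<otimes> (h \<otimes> b)" using ac bc hc e2 by (simp add: m_assoc)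
    also have "\<dots> = (h \<otimes> a) \<otimes> b" using ac bc hc e by (simp add: m_assoc[symmetric])
    finally show "a \<otimes> b \<otimes> h = h \<otimes> (a \<otimes> b)" using ac bc hc by (simp add: m_assoc)
  qed
qed

lemma cent_anti: "H \<subseteq> K \<Longrightarrow> C K \<subseteq> C H"
  unfolding centralizer_def by auto

lemma sub_cc: "H \<subseteq> carrier G \<Longrightarrow> H \<subseteq> C (C H)"
  unfolding centralizer_def by auto

lemma cent_one: "C {\<one>} = carrier G"
  unfolding centralizer_def by auto

lemma fin_sub: "subgroup H G \<Longrightarrow> finite H"
  using fin subgroup.subset finite_subset by blast

lemma card_pos: "subgroup H G \<Longrightarrow> card H > 0"
  using fin_sub subgroup.one_closed card_gt_0_iff by blast

lemma fin_meas: "finite {mm H | H. subgroup H G}"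
proof -
  have "{mm H | H. subgroup H G} = mm ` {H. subgroup H G}" by auto
  moreover have "finite {H. subgroup H G}"
    using fin by (rule finite_subset[rotated, OF finite_Pow_iff[THEN iffD2]]) (auto dest: subgroup.subset)
  ultimately show ?thesis by simp
qed

lemma m_le: "subgroup H G \<Longrightarrow> mm H \<le> cd_max G"
  unfolding cd_max_def using fin_meas by (intro Max_ge) auto

lemma m_one: "mm {\<one>} = card (carrier G)"
  unfolding cd_measure_def using cent_one by simp

lemma max_pos: "cd_max G > 0"
  using m_le[OF triv_subgroup] m_one fin card_gt_0_iff by fastforce

lemma max_ex: "\<exists>H. subgroup H G \<and> mm H = cd_max G"
proof -
  have "cd_max G \<in> {mm H | H. subgroup H G}"
    unfolding cd_max_def using fin_meas triv_subgroup by (intro Max_in) auto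
  then show ?thesis by auto
qed

lemma prod_bound:
  assumes H: "subgroup H G" and K: "subgroup K G"
  shows "card H * card K \<le> card (H <#> K) * card (H \<inter> K)"
proof -
  define F where "F z = {p \<in> H \<times> K. fst p \<otimes> snd p = z}" for z
  have fHK: "finite (H <#> K)"
    using fin finite_subset[of "H <#> K" "carrier G"] H K unfolding set_mult_def
    by (auto dest: subgroup.subset)
  have "H \<times> K \<subseteq> (\<Union>z\<in>H <#> K. F z)"
    unfolding F_def set_mult_def by force
  hence "card (H \<times> K) \<le> card (\<Union>z\<in>H <#> K. F z)"
    by (intro card_mono) (use fHK fin_sub[OF H] fin_sub[OF K] in \<open>auto simp: F_def\<close>)
  also have "\<dots> \<le> (\<Sum>z\<in>H <#> K. card (F z))" using fHK by (rule card_UN_le)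
  also have "\<dots> \<le> (\<Sum>z\<in>H <#> K. card (H \<inter> K))"
  proof (rule sum_mono)
    fix z assume "z \<in> H <#> K"
    show "card (F z) \<le> card (H \<inter> K)"
    proof (cases "F z = {}")
      case True thus ?thesis by simp
    next
      case False
      then obtain h0 k0 where p0: "h0 \<in> H" "k0 \<in> K" "h0 \<otimes> k0 = z" unfolding F_def by auto
      have h0c: "h0 \<in> carrier G" and k0c: "k0 \<in> carrier G" using p0 H K subgroup.mem_carrier by auto
      have "inj_on (\<lambda>p. inv h0 \<otimes> fst p) (F z)"
      proof (rule inj_onI)
        fix p q assume p: "p \<in> F z" and q: "q \<in> F z" and e: "inv h0 \<otimes> fst p = inv h0 \<otimes> fst q"
        have pc: "fst p \<in> carrier G" "snd p \<in> carrier G" "fst q \<in> carrier G" "snd q \<in> carrier G"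
          using p q H K subgroup.mem_carrier unfolding F_def by auto
        have f: "fst p = fst q" using e h0c pc by simp
        have "fst p \<otimes> snd p = fst p \<otimes> snd q" using p q f unfolding F_def by auto
        hence "snd p = snd q" using pc by simp
        with f show "p = q" by (simp add: prod_eq_iff)
      qed
      moreover have "(\<lambda>p. inv h0 \<otimes> fst p) ` (F z) \<subseteq> H \<inter> K"
      proof
        fix w assume "w \<in> (\<lambda>p. inv h0 \<otimes> fst p) ` (F z)"
        then obtain h k where hk: "h \<in> H" "k \<in> K" "h \<otimes> k = z" and w: "w = inv h0 \<otimes> h"
          unfolding F_def by auto
        have hc: "h \<in> carrier G" and kc: "k \<in> carrier G" using hk H K subgroup.mem_carrier by auto
        have wH: "w \<in> H" using w hk p0 H by (simp add: subgroup.m_closed subgroup.m_inv_closed)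
        have "h0 \<otimes> k0 = h \<otimes> k" using hk p0 by simp
        hence "inv h0 \<otimes> (h0 \<otimes> k0) \<otimes> inv k = inv h0 \<otimes> (h \<otimes> k) \<otimes> inv k" by simp
        hence "k0 \<otimes> inv k = inv h0 \<otimes> h"
          using h0c k0c hc kc by (simp add: m_assoc[symmetric]) (simp add: m_assoc)
        hence "w = k0 \<otimes> inv k" using w by simp
        hence "w \<in> K" using hk p0 K by (simp add: subgroup.m_closed subgroup.m_inv_closed)
        with wH show "w \<in> H \<inter> K" by simp
      qed
      ultimately show ?thesis
        using card_inj_on_le fin_sub[OF H] by (meson finite_Int)
    qed
  qed
  also have "\<dots> = card (H <#> K) * card (H \<inter> K)" by simp
  finally show ?thesis by (simp add: card_cartesian_product)
qed

lemma arith1: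
  fixes x y a b m :: nat
  assumes "x \<le> a" "y \<le> b" "a \<le> m" "b \<le> m" "m * m \<le> x * y" "0 < m"
  shows "a = m \<and> x = a \<and> b = m \<and> y = b"
proof -
  have xy: "x * y \<le> a * b" using assms by (simp add: mult_le_mono)
  have ab: "a * b \<le> m * m" using assms by (simp add: mult_le_mono)
  have a: "a = m"
  proof (rule ccontr)
    assume "a \<noteq> m" hence "a < m" using assms by simp
    hence "a * b < m * m" using assms
      by (metis mult_le_mono2 mult_less_cancel2 order_le_less_trans)
    thus False using xy assms by simp
  qed
  have b: "b = m"
  proof (rule ccontr)
    assume "b \<noteq> m" hence "b < m" using assms by simp
    hence "a * b < m * m" using assms a by simp
    thus False using xy assms by simp
  qed
  have x: "x = m"
  proof (rule ccontr)
    assume "x \<noteq> m" hence "x < m" using assms a by simp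
    hence "x * y < m * m" using assms b
      by (metis mult_le_mono2 mult_less_cancel2 order_le_less_trans)
    thus False using assms by simp
  qed
  have "y = m"
  proof (rule ccontr)
    assume "y \<noteq> m" hence "y < m" using assms b by simp
    hence "x * y < m * m" using assms x by simp
    thus False using assms by simp
  qed
  thus ?thesis using a b x by simp
qed

lemma meet:
  assumes H: "subgroup H G" and K: "subgroup K G"
    and mH: "mm H = cd_max G" and mK: "mm K = cd_max G"
  shows "mm (H \<inter> K) = cd_max G \<and> C (H \<inter> K) = C H <#> C K"
proof -
  have Hc: "H \<subseteq> carrier G" and Kc: "K \<subseteq> carrier G" using H K subgroup.subset by auto
  have CH: "subgroup (C H) G" and CK: "subgroup (C K) G" using cent_subgroup Hc Kc by auto
  define J where "J = C (C H \<inter> C K)"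
  have J: "subgroup J G" unfolding J_def by (rule cent_subgroup) (use cent_sub in auto)
  have "H \<subseteq> J" using Hc unfolding J_def centralizer_def by auto
  moreover have "K \<subseteq> J" using Kc unfolding J_def centralizer_def by auto
  ultimately have HKJ: "H <#> K \<subseteq> J" using J unfolding set_mult_def by (auto intro: subgroup.m_closed)
  have CJ: "C H \<inter> C K \<subseteq> C J" unfolding J_def by (rule sub_cc) (use cent_sub in auto)
  have HK: "subgroup (H \<inter> K) G" using H K by (rule subgroups_Inter_pair)
  have CHK: "C H <#> C K \<subseteq> C (H \<inter> K)"
  proof
    fix w assume "w \<in> C H <#> C K"
    then obtain a b where ab: "a \<in> C H" "b \<in> C K" "w = a \<otimes> b" unfolding set_mult_def by auto
    have "a \<in> C (H \<inter> K)" "b \<in> C (H \<inter> K)" using ab cent_anti[of "H \<inter> K"] by auto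
    thus "w \<in> C (H \<inter> K)" using ab cent_subgroup[of "H \<inter> K"] Hc
      by (auto intro: subgroup.m_closed)
  qed
  have f1: "card (H <#> K) \<le> card J" using HKJ fin_sub[OF J] by (rule card_mono[rotated])
  have f2: "card (C H \<inter> C K) \<le> card (C J)"
    using CJ fin_sub[OF cent_subgroup[of J]] J subgroup.subset by (metis card_mono)
  have f3: "card (C H <#> C K) \<le> card (C (H \<inter> K))"
    using CHK fin_sub[OF cent_subgroup[of "H \<inter> K"]] Hc by (metis card_mono le_infI1)
  define x where "x = card (H \<inter> K) * card (C H <#> C K)"
  define y where "y = card (H <#> K) * card (C H \<inter> C K)"
  have xa: "x \<le> mm (H \<inter> K)" unfolding x_def cd_measure_def using f3 by simp
  have yb: "y \<le> mm J" unfolding y_def cd_measure_def using f1 f2 by (simp add: mult_le_mono)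
  have p1: "card H * card K \<le> card (H <#> K) * card (H \<inter> K)" by (rule prod_bound[OF H K])
  have p2: "card (C H) * card (C K) \<le> card (C H <#> C K) * card (C H \<inter> C K)" by (rule prod_bound[OF CH CK])
  have "cd_max G * cd_max G = (card H * card (C H)) * (card K * card (C K))"
    using mH mK unfolding cd_measure_def by simp
  also have "\<dots> = (card H * card K) * (card (C H) * card (C K))" by (simp add: ac_simps)
  also have "\<dots> \<le> (card (H <#> K) * card (H \<inter> K)) * (card (C H <#> C K) * card (C H \<inter> C K))"
    using p1 p2 by (rule mult_le_mono)
  also have "\<dots> = x * y" unfolding x_def y_def by simp
  finally have "cd_max G * cd_max G \<le> x * y" .
  from arith1[OF xa yb m_le[OF HK] m_le[OF J] this max_pos]
  have r: "mm (H \<inter> K) = cd_max G" "x = mm (H \<inter> K)" by auto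
  hence "card (C H <#> C K) = card (C (H \<inter> K))"
    using card_pos[OF HK] unfolding x_def cd_measure_def by (metis mult_left_cancel not_gr0)
  hence "C H <#> C K = C (H \<inter> K)"
    using CHK fin_sub[OF cent_subgroup[of "H \<inter> K"]] Hc by (metis card_subset_eq le_infI1)
  thus ?thesis using r by simp
qed

lemma canc1[simp]: "g \<in> carrier G \<Longrightarrow> y \<in> carrier G \<Longrightarrow> inv g \<otimes> (g \<otimes> y) = y"
  by (simp add: m_assoc[symmetric])
lemma canc2[simp]: "g \<in> carrier G \<Longrightarrow> y \<in> carrier G \<Longrightarrow> g \<otimes> (inv g \<otimes> y) = y"
  by (simp add: m_assoc[symmetric])

lemma conj_subgroup:
  assumes g: "g \<in> carrier G" and Q: "subgroup Q G"
  shows "subgroup ((\<lambda>x. g \<otimes> x \<otimes> inv g) ` Q) G"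
proof (rule subgroupI)
  show "(\<lambda>x. g \<otimes> x \<otimes> inv g) ` Q \<subseteq> carrier G" using g Q subgroup.mem_carrier by fastforce
  show "(\<lambda>x. g \<otimes> x \<otimes> inv g) ` Q \<noteq> {}" using Q subgroup.one_closed by blast
next
  fix a assume "a \<in> (\<lambda>x. g \<otimes> x \<otimes> inv g) ` Q"
  then obtain x where x: "x \<in> Q" "a = g \<otimes> x \<otimes> inv g" by auto
  have xc: "x \<in> carrier G" using x subgroup.mem_carrier[OF Q] by auto
  have "inv a = g \<otimes> inv x \<otimes> inv g" using x xc g by (simp add: inv_mult_group m_assoc)
  moreover have "inv x \<in> Q" using x subgroup.m_inv_closed[OF Q] by auto
  ultimately show "inv a \<in> (\<lambda>x. g \<otimes> x \<otimes> inv g) ` Q" by auto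
next
  fix a b assume "a \<in> (\<lambda>x. g \<otimes> x \<otimes> inv g) ` Q" "b \<in> (\<lambda>x. g \<otimes> x \<otimes> inv g) ` Q"
  then obtain x y where x: "x \<in> Q" "a = g \<otimes> x \<otimes> inv g" and y: "y \<in> Q" "b = g \<otimes> y \<otimes> inv g" by auto
  have xc: "x \<in> carrier G" "y \<in> carrier G" using x y subgroup.mem_carrier[OF Q] by auto
  have "a \<otimes> b = g \<otimes> (x \<otimes> y) \<otimes> inv g" using x y xc g by (simp add: m_assoc)
  moreover have "x \<otimes> y \<in> Q" using x y subgroup.m_closed[OF Q] by auto
  ultimately show "a \<otimes> b \<in> (\<lambda>x. g \<otimes> x \<otimes> inv g) ` Q" by auto
qed

lemma conj_inj: assumes g: "g \<in> carrier G" and S: "S \<subseteq> carrier G"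
  shows "inj_on (\<lambda>x. g \<otimes> x \<otimes> inv g) S"
proof (rule inj_onI)
  fix x y assume "x \<in> S" "y \<in> S" "g \<otimes> x \<otimes> inv g = g \<otimes> y \<otimes> inv g"
  thus "x = y" using g S by (simp add: subsetD)
qed

lemma conj_meas:
  assumes g: "g \<in> carrier G" and Q: "subgroup Q G" and mX: "mm Q = cd_max G"
  shows "mm ((\<lambda>x. g \<otimes> x \<otimes> inv g) ` Q) = cd_max G"
proof -
  let ?Y = "(\<lambda>x. g \<otimes> x \<otimes> inv g) ` Q"
  have Y: "subgroup ?Y G" using conj_subgroup[OF g Q] .
  have Xc: "Q \<subseteq> carrier G" using Q subgroup.subset by auto
  have cY: "card ?Y = card Q" using card_image conj_inj[OF g Xc] by blast
  have sub: "(\<lambda>x. g \<otimes> x \<otimes> inv g) ` C Q \<subseteq> C ?Y"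
  proof
    fix w assume "w \<in> (\<lambda>x. g \<otimes> x \<otimes> inv g) ` C Q"
    then obtain c where c: "c \<in> C Q" "w = g \<otimes> c \<otimes> inv g" by auto
    have cc: "c \<in> carrier G" using c cent_sub by auto
    show "w \<in> C ?Y" unfolding centralizer_def
    proof safe
      show "w \<in> carrier G" using c cc g by simp
    next
      fix x assume x: "x \<in> Q"
      have xc: "x \<in> carrier G" using x Xc by auto
      have e: "c \<otimes> x = x \<otimes> c" using c x unfolding centralizer_def by auto
      have "w \<otimes> (g \<otimes> x \<otimes> inv g) = g \<otimes> (c \<otimes> x) \<otimes> inv g" using c cc xc g by (simp add: m_assoc)
      also have "\<dots> = g \<otimes> (x \<otimes> c) \<otimes> inv g" using e by simp
      also have "\<dots> = (g \<otimes> x \<otimes> inv g) \<otimes> w" using c cc xc g by (simp add: m_assoc)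
      finally show "w \<otimes> (g \<otimes> x \<otimes> inv g) = (g \<otimes> x \<otimes> inv g) \<otimes> w" .
    qed
  qed
  have "card (C Q) = card ((\<lambda>x. g \<otimes> x \<otimes> inv g) ` C Q)"
    using card_image conj_inj[OF g cent_sub] by metis
  also have "\<dots> \<le> card (C ?Y)" using sub fin_sub[OF cent_subgroup] Y subgroup.subset
    by (metis card_mono)
  finally have "mm Q \<le> mm ?Y" unfolding cd_measure_def using cY by simp
  thus ?thesis using mX m_le[OF Y] by simp
qed


lemma atom_normal:
  assumes Q: "subgroup Q G" and mX: "mm Q = cd_max G"
    and atom: "\<And>D. subgroup D G \<Longrightarrow> D \<subseteq> Q \<Longrightarrow> mm D = cd_max G \<Longrightarrow> D = Q \<or> D = {\<one>}"
  shows "Q \<lhd> G"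
  unfolding normal_inv_iff
proof (intro conjI Q ballI)
  fix g h assume g: "g \<in> carrier G" and h: "h \<in> Q"
  let ?Y = "(\<lambda>x. g \<otimes> x \<otimes> inv g) ` Q"
  have Y: "subgroup ?Y G" using conj_subgroup[OF g Q] .
  have Xc: "Q \<subseteq> carrier G" using Q subgroup.subset by auto
  have hc: "h \<in> carrier G" using h Xc by auto
  have mY: "mm ?Y = cd_max G" using conj_meas[OF g Q mX] .
  from meet[OF Q Y mX mY] have D: "mm (Q \<inter> ?Y) = cd_max G" "C (Q \<inter> ?Y) = C Q <#> C ?Y" by auto
  have "Q \<inter> ?Y = Q \<or> Q \<inter> ?Y = {\<one>}" using atom[OF subgroups_Inter_pair[OF Q Y] _ D(1)] by auto
  thus "g \<otimes> h \<otimes> inv g \<in> Q"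
  proof
    assume "Q \<inter> ?Y = Q"
    hence "Q \<subseteq> ?Y" by auto
    moreover have "card ?Y = card Q" using card_image conj_inj[OF g Xc] by blast
    ultimately have "Q = ?Y" using fin_sub[OF Y] by (metis card_subset_eq)
    thus ?thesis using h by auto
  next
    assume "Q \<inter> ?Y = {\<one>}"
    hence "C Q <#> C ?Y = carrier G" using D(2) cent_one by simp
    hence "inv g \<in> C Q <#> C ?Y" using g by simp
    then obtain k1 k2 where k: "k1 \<in> C Q" "k2 \<in> C ?Y" "inv g = k1 \<otimes> k2"
      unfolding set_mult_def by auto
    have k1c: "k1 \<in> carrier G" and k2c: "k2 \<in> carrier G" using subsetD[OF cent_sub k(1)] subsetD[OF cent_sub k(2)] by auto
    have ik1: "inv k1 \<in> C Q" by (rule subgroup.m_inv_closed[OF cent_subgroup[OF Xc] k(1)])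
    have e1: "inv k1 \<otimes> h = h \<otimes> inv k1" using ik1 h unfolding centralizer_def by auto
    define y where "y = g \<otimes> h \<otimes> inv g"
    have yc: "y \<in> carrier G" unfolding y_def using g hc by simp
    have "y \<in> ?Y" unfolding y_def using h by blast
    hence e2: "k2 \<otimes> y = y \<otimes> k2" using k(2) unfolding centralizer_def by blast
    have k2e: "k2 = inv k1 \<otimes> inv g" using k(3) k1c k2c g by simp
    have "inv k1 \<otimes> h \<otimes> inv g = k2 \<otimes> y"
      unfolding k2e y_def using g hc k1c by (simp add: m_assoc)
    also have "\<dots> = y \<otimes> k2" by (rule e2)
    also have "\<dots> = y \<otimes> inv k1 \<otimes> inv g" using k2e yc k1c g by (simp add: m_assoc)
    finally have "inv k1 \<otimes> h = y \<otimes> inv k1" using g hc k1c yc by simp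
    hence "h \<otimes> inv k1 = y \<otimes> inv k1" using e1 by simp
    hence "h = y" using hc yc k1c by simp
    thus ?thesis using h y_def by simp
  qed
qed


lemma two_factor:
  assumes H: "subgroup H G" and K: "subgroup K G"
    and comm: "\<And>h k. h \<in> H \<Longrightarrow> k \<in> K \<Longrightarrow> h \<otimes> k = k \<otimes> h"
    and HK: "H <#> K = carrier G"
  shows "H \<lhd> G \<and> K \<lhd> G"
proof
  show "H \<lhd> G" unfolding normal_inv_iff
  proof (intro conjI H ballI)
    fix g h' assume g: "g \<in> carrier G" and h': "h' \<in> H"
    have "g \<in> H <#> K" using g HK by simp
    then obtain h k where hk: "h \<in> H" "k \<in> K" "g = h \<otimes> k" unfolding set_mult_def by auto
    have c: "h \<in> carrier G" "k \<in> carrier G" "h' \<in> carrier G"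
      using hk h' subgroup.mem_carrier[OF H] subgroup.mem_carrier[OF K] by auto
    have "g \<otimes> h' \<otimes> inv g = h \<otimes> (k \<otimes> h') \<otimes> inv k \<otimes> inv h"
      using c hk by (simp add: m_assoc inv_mult_group)
    also have "\<dots> = h \<otimes> (h' \<otimes> k) \<otimes> inv k \<otimes> inv h" using comm[OF h' hk(2)] by simp
    also have "\<dots> = h \<otimes> h' \<otimes> inv h" using c by (simp add: m_assoc)
    finally show "g \<otimes> h' \<otimes> inv g \<in> H"
      using hk h' H by (simp add: subgroup.m_closed subgroup.m_inv_closed)
  qed
  show "K \<lhd> G" unfolding normal_inv_iff
  proof (intro conjI K ballI)
    fix g k' assume g: "g \<in> carrier G" and k': "k' \<in> K"
    have "g \<in> H <#> K" using g HK by simp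
    then obtain h k where hk: "h \<in> H" "k \<in> K" "g = h \<otimes> k" unfolding set_mult_def by auto
    have c: "h \<in> carrier G" "k \<in> carrier G" "k' \<in> carrier G"
      using hk k' subgroup.mem_carrier[OF H] subgroup.mem_carrier[OF K] by auto
    define k'' where "k'' = k \<otimes> k' \<otimes> inv k"
    have k''K: "k'' \<in> K" unfolding k''_def using hk k' K by (simp add: subgroup.m_closed subgroup.m_inv_closed)
    have k''c: "k'' \<in> carrier G" using k''K subgroup.mem_carrier[OF K] by auto
    have "g \<otimes> k' \<otimes> inv g = h \<otimes> k'' \<otimes> inv h"
      unfolding k''_def using c hk by (simp add: m_assoc inv_mult_group)
    also have "\<dots> = k'' \<otimes> h \<otimes> inv h" using comm[OF hk(1) k''K] by simp
    also have "\<dots> = k''" using c k''c by (simp add: m_assoc)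
    finally show "g \<otimes> k' \<otimes> inv g \<in> K" using k''K by simp
  qed
qed

lemma cent_CD:
  assumes H: "subgroup H G" and mH: "mm H = cd_max G"
  shows "mm (C H) = cd_max G"
proof -
  have Hc: "H \<subseteq> carrier G" using H subgroup.subset by auto
  have CH: "subgroup (C H) G" using cent_subgroup[OF Hc] .
  have "card H \<le> card (C (C H))"
    using sub_cc[OF Hc] fin_sub[OF cent_subgroup[OF cent_sub]] by (rule card_mono[rotated])
  hence "mm H \<le> mm (C H)" unfolding cd_measure_def by (simp add: mult.commute)
  thus ?thesis using mH m_le[OF CH] by simp
qed

lemma propA_bound:
  assumes pA: "property_A G" and A: "A \<lhd> G" and nt: "A \<noteq> {\<one>}"
    and ab: "\<And>x y. x \<in> A \<Longrightarrow> y \<in> A \<Longrightarrow> x \<otimes> y = y \<otimes> x"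
  shows "mm A < card (carrier G)"
proof -
  have As: "subgroup A G" using A normal_imp_subgroup by auto
  have Ac: "A \<subseteq> carrier G" using As subgroup.subset by auto
  have "card (rcosets (C A)) > card A" using pA A nt ab unfolding property_A_def by blast
  moreover have "card (rcosets (C A)) * card (C A) = card (carrier G)"
    using lagrange[OF cent_subgroup[OF Ac]] unfolding order_def .
  moreover have "card (C A) > 0" using card_pos[OF cent_subgroup[OF Ac]] .
  ultimately show ?thesis unfolding cd_measure_def by (metis mult_less_mono1)
qed

lemma least_pick:
  assumes "M0 \<in> S"
  obtains M where "M \<in> S" "\<And>N. N \<in> S \<Longrightarrow> card M \<le> card N"
proof -
  let ?n = "LEAST n. \<exists>M\<in>S. card M = n"
  have "\<exists>M\<in>S. card M = ?n" using LeastI_ex[of "\<lambda>n. \<exists>M\<in>S. card M = n"] assms by blast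
  then obtain M where M: "M \<in> S" "card M = ?n" by blast
  have "\<And>N. N \<in> S \<Longrightarrow> card M \<le> card N" using M(2) by (auto intro: Least_le)
  with M(1) show ?thesis using that by blast
qed

lemma min1:
  assumes pA: "property_A G"
  shows "cd_max G = card (carrier G)"
proof -
  let ?S = "{M. subgroup M G \<and> mm M = cd_max G}"
  obtain M0 where "subgroup M0 G" "mm M0 = cd_max G" using max_ex by blast
  then obtain M where M: "M \<in> ?S" and mn: "\<And>N. N \<in> ?S \<Longrightarrow> card M \<le> card N"
    using least_pick[of M0 ?S] by blast
  have Ms: "subgroup M G" and mM: "mm M = cd_max G" using M by auto
  have Mc: "M \<subseteq> carrier G" using Ms subgroup.subset by auto
  have atom: "D = M" if "subgroup D G" "D \<subseteq> M" "mm D = cd_max G" for D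
  proof -
    have "card M \<le> card D" using mn that by blast
    thus ?thesis using that fin_sub[OF Ms] by (metis card_seteq)
  qed
  have nM: "M \<lhd> G" using atom_normal[OF Ms mM] atom by blast
  have CM: "subgroup (C M) G" using cent_subgroup[OF Mc] .
  have "mm (M \<inter> C M) = cd_max G" using meet[OF Ms CM mM cent_CD[OF Ms mM]] by blast
  hence "M \<inter> C M = M" using atom subgroups_Inter_pair[OF Ms CM] by blast
  hence ab: "\<And>x y. x \<in> M \<Longrightarrow> y \<in> M \<Longrightarrow> x \<otimes> y = y \<otimes> x" unfolding centralizer_def by blast
  have "M = {\<one>}"
  proof (rule ccontr)
    assume "M \<noteq> {\<one>}"
    from propA_bound[OF pA nM this ab] have "cd_max G < card (carrier G)" using mM by simp
    thus False using m_le[OF triv_subgroup] m_one by simp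
  qed
  thus ?thesis using mM m_one by simp
qed

lemma main2:
  assumes pA: "property_A G" and ind: "indecomposable G"
    and H: "subgroup H G" and mH: "mm H = cd_max G" and nt: "H \<noteq> {\<one>}"
  shows "H = carrier G"
proof -
  have mx: "cd_max G = card (carrier G)" using min1[OF pA] .
  let ?S = "{Q. subgroup Q G \<and> mm Q = cd_max G \<and> Q \<subseteq> H \<and> Q \<noteq> {\<one>}}"
  have "H \<in> ?S" using H mH nt by auto
  then obtain Q where Q: "Q \<in> ?S" and mn: "\<And>N. N \<in> ?S \<Longrightarrow> card Q \<le> card N"
    using least_pick[of H ?S] by blast
  have Qs: "subgroup Q G" and mQ: "mm Q = cd_max G" and QH: "Q \<subseteq> H" and Qnt: "Q \<noteq> {\<one>}"
    using Q by auto
  have Qc: "Q \<subseteq> carrier G" using Qs subgroup.subset by auto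
  have atom: "D = Q \<or> D = {\<one>}" if "subgroup D G" "D \<subseteq> Q" "mm D = cd_max G" for D
  proof (cases "D = {\<one>}")
    case False
    hence "D \<in> ?S" using that QH by auto
    hence "card Q \<le> card D" using mn by blast
    thus ?thesis using that fin_sub[OF Qs] by (metis card_seteq)
  qed simp
  have nQ: "Q \<lhd> G" using atom_normal[OF Qs mQ] atom by blast
  have CQ: "subgroup (C Q) G" using cent_subgroup[OF Qc] .
  have mCQ: "mm (C Q) = cd_max G" using cent_CD[OF Qs mQ] .
  have "mm (Q \<inter> C Q) = cd_max G" using meet[OF Qs CQ mQ mCQ] by blast
  hence "Q \<inter> C Q = Q \<or> Q \<inter> C Q = {\<one>}" using atom subgroups_Inter_pair[OF Qs CQ] by blast
  thus ?thesis
  proof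
    assume "Q \<inter> C Q = Q"
    hence ab: "\<And>x y. x \<in> Q \<Longrightarrow> y \<in> Q \<Longrightarrow> x \<otimes> y = y \<otimes> x" unfolding centralizer_def by blast
    from propA_bound[OF pA nQ Qnt ab] have False using mQ mx by simp
    thus ?thesis ..
  next
    assume i: "Q \<inter> C Q = {\<one>}"
    have "card Q * card (C Q) \<le> card (Q <#> C Q) * card (Q \<inter> C Q)" using prod_bound[OF Qs CQ] .
    hence le: "card (carrier G) \<le> card (Q <#> C Q)" using i mQ mx unfolding cd_measure_def by simp
    have sub: "Q <#> C Q \<subseteq> carrier G" unfolding set_mult_def
      using Qc cent_sub by auto
    have eq: "Q <#> C Q = carrier G" using card_seteq[OF fin sub le] .
    have comm: "\<And>h k. h \<in> Q \<Longrightarrow> k \<in> C Q \<Longrightarrow> h \<otimes> k = k \<otimes> h"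
      unfolding centralizer_def by auto
    have nC: "C Q \<lhd> G" using two_factor[OF Qs CQ comm eq] by blast
    have "C Q = {\<one>}"
      using ind nQ nC i eq Qnt unfolding indecomposable_def by blast
    hence "card Q = card (carrier G)" using mQ mx unfolding cd_measure_def by simp
    hence "Q = carrier G" using Qc fin by (metis card_subset_eq)
    thus ?thesis using QH H subgroup.subset by blast
  qed
qed

lemma final:
  assumes ind: "indecomposable G"
  shows "property_A G \<longleftrightarrow> CD_simple G"
proof -
  show ?thesis
  proof
    assume pA: "property_A G"
    have mx: "cd_max G = card (carrier G)" using min1[OF pA] .
    have "CD G = {{\<one>}, carrier G}"
    proof (intro equalityI subsetI)
      fix H assume "H \<in> CD G"
      hence "subgroup H G" "mm H = cd_max G" unfolding CD_def by auto
      thus "H \<in> {{\<one>}, carrier G}" using main2[OF pA ind] by blast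
    next
      fix H assume "H \<in> {{\<one>}, carrier G}"
      thus "H \<in> CD G"
      proof
        assume "H = {\<one>}" thus ?thesis unfolding CD_def using triv_subgroup m_one mx by simp
      next
        assume h: "H \<in> {carrier G}"
        have "card (C (carrier G)) \<ge> 1"
          using card_pos[OF cent_subgroup[of "carrier G"]] by simp
        hence "mm (carrier G) \<ge> card (carrier G)" unfolding cd_measure_def by simp
        moreover have "mm (carrier G) \<le> cd_max G" using m_le[OF subgroup_self] .
        ultimately show ?thesis using h mx subgroup_self unfolding CD_def by simp
      qed
    qed
    thus "CD_simple G" unfolding CD_simple_def .
  next
    assume cs: "CD_simple G"
    hence CDe: "CD G = {{\<one>}, carrier G}" unfolding CD_simple_def .
    have "{\<one>} \<in> CD G" using CDe by simp
    hence mx: "cd_max G = card (carrier G)" using m_one unfolding CD_def by simp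
    show "property_A G" unfolding property_A_def
    proof (intro allI impI, elim conjE)
      fix A assume A: "A \<lhd> G" and nt: "A \<noteq> {\<one>}"
        and ab: "\<forall>x\<in>A. \<forall>y\<in>A. x \<otimes> y = y \<otimes> x"
      have As: "subgroup A G" using A normal_imp_subgroup by auto
      have Ac: "A \<subseteq> carrier G" using As subgroup.subset by auto
      have lt: "mm A < card (carrier G)"
      proof (rule ccontr)
        assume "\<not> mm A < card (carrier G)"
        hence "mm A = cd_max G" using m_le[OF As] mx by simp
        hence "A \<in> CD G" using As unfolding CD_def by simp
        hence AG: "A = carrier G" using CDe nt by simp
        hence "C A = carrier G" using ab unfolding centralizer_def by auto
        hence "card (carrier G) * card (carrier G) = card (carrier G)"
          using \<open>mm A = cd_max G\<close> mx AG unfolding cd_measure_def by simp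
        hence "card (carrier G) = 1" using fin card_gt_0_iff by fastforce
        hence "carrier G = {\<one>}" using one_closed by (metis card_1_singletonE singletonD)
        thus False using AG nt by simp
      qed
      have "card (rcosets (C A)) * card (C A) = card (carrier G)"
        using lagrange[OF cent_subgroup[OF Ac]] unfolding order_def .
      moreover have "card (C A) > 0" using card_pos[OF cent_subgroup[OF Ac]] .
      ultimately show "card A < card (rcosets (C A))"
        using lt unfolding cd_measure_def by (metis mult_less_cancel2)
    qed
  qed
qed

end

theorem corollary1:
  fixes G :: "('a, 'b) monoid_scheme"
  assumes "group G" and "finite (carrier G)" and "indecomposable G"
  shows "property_A G \<longleftrightarrow> CD_simple G"
proof -
  interpret cdg G by (rule cdg.intro[OF assms(1)]) (unfold_locales, rule assms(2))
  show ?thesis using final[OF assms(3)] .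
qed

end
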